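(* Consider Cobb--Douglas exchange economies with $n$ agents and $m$ commodities such that every agent owns a strictly positive amount of every commodity ($e_{ij}>0$ for all $i\in[n]$, $j\in[m]$) and strong competitiveness holds both for the truthful and for the misreported profile (for every commodity $j$ there is an agent $k$ with $\alpha_{kj}>0$, and for every $j$ there is an agent $k$ with $\alpha'_{kj}>0$, where $\alpha'$ denotes the reported exponents when agent $i$ misreports). Then the incentive ratio is at most $m$: for every such economy, agent $i$ and misreport $u_i'$, $$\frac{u_i(x_i')}{u_i(x_i)}\le m,$$ where $x$ and $x'$ are the competitive equilibrium allocations under truthful reporting and under the misreport, respectively.
   Context: An exchange economy with $n$ agents and $m$ commodities is a tuple $((u_i)_{i=1}^n,(e_i)_{i=1}^n)$, with $u_i:\mathbb{R}_+^m\to\mathbb{R}$ and endowments $e_i\in\mathbb{R}_+^m$; without loss of generality $e_i\in[0,1]^m$ and $\sum_i e_{ij}=1$ for each $j$. Cobb--Douglas utilities are $u_k(x)=\prod_{j=1}^m x_j^{\alpha_{kj}}$ with $0\le\alpha_{kj}\le1$, $\sum_j\alpha_{kj}=1$. Given prices $p$, agent $k$'s demand is the set of maximizers of $u_k(x_k)$ subject to $p\cdot x_k\le p\cdot e_k$, $x_k\ge0$. A competitive equilibrium is a pair $(p,x)$ with markets clearing and each $x_k$ in agent $k$'s demand at $p$; under the stated assumptions the equilibrium price is unique (up to scaling) and positive. In the misreported scenario agent $i$ reports a Cobb--Douglas utility $u_i'$ with exponents $\alpha_i'$ while all others report truthfully, yielding equilibrium allocation $x'$, and $x_i'$ is evaluated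 with the true $u_i$. The incentive ratio is the supremum of $u_i(x_i')/u_i(x_i)$ over all such economies, agents and misreports. *)

theory Defs
  imports Complex_Main
begin

text \<open>Agents are indexed by k < n, commodities by j < m.
  Exponents: alpha :: nat => nat => real, alpha k j = exponent of agent k on good j.
  Endowments e k j, allocations x k j, prices p j.\<close>

definition cobb_douglas :: "nat \<Rightarrow> (nat \<Rightarrow> real) \<Rightarrow> (nat \<Rightarrow> real) \<Rightarrow> real" where
  "cobb_douglas m a y = (\<Prod>j<m. if a j = 0 then 1 else y j powr a j)"
  \<comment> \<open>x^a with the convention x^0 = 1 (powr has 0 powr 0 = 0)\<close>

definition valid_exponents :: "nat \<Rightarrow> (nat \<Rightarrow> real) \<Rightarrow> bool" where
  "valid_exponents m a \<longleftrightarrow> (\<forall>j<m. 0 \<le> a j \<and> a j \<le> 1) \<and> (\<Sum>j<m. a j) = 1"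

definition valid_endowments :: "nat \<Rightarrow> nat \<Rightarrow> (nat \<Rightarrow> nat \<Rightarrow> real) \<Rightarrow> bool" where
  "valid_endowments n m e \<longleftrightarrow>
     (\<forall>k<n. \<forall>j<m. 0 \<le> e k j \<and> e k j \<le> 1) \<and> (\<forall>j<m. (\<Sum>k<n. e k j) = 1)"

definition strongly_competitive :: "nat \<Rightarrow> nat \<Rightarrow> (nat \<Rightarrow> nat \<Rightarrow> real) \<Rightarrow> bool" where
  "strongly_competitive n m a \<longleftrightarrow> (\<forall>j<m. \<exists>k<n. a k j > 0)"

definition price_dot :: "nat \<Rightarrow> (nat \<Rightarrow> real) \<Rightarrow> (nat \<Rightarrow> real) \<Rightarrow> real" where
  "price_dot m p y = (\<Sum>j<m. p j * y j)"

definition in_demand :: "nat \<Rightarrow> (nat \<Rightarrow> real) \<Rightarrow> (nat \<Rightarrow> real) \<Rightarrow> (nat \<Rightarrow> real) \<Rightarrow> (nat \<Rightarrow> real) \<Rightarrow> bool" where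
  "in_demand m a w p y \<longleftrightarrow>
     (\<forall>j<m. 0 \<le> y j) \<and> price_dot m p y \<le> price_dot m p w \<and>
     (\<forall>z. (\<forall>j<m. 0 \<le> z j) \<and> price_dot m p z \<le> price_dot m p w
          \<longrightarrow> cobb_douglas m a z \<le> cobb_douglas m a y)"

definition competitive_equilibrium ::
  "nat \<Rightarrow> nat \<Rightarrow> (nat \<Rightarrow> nat \<Rightarrow> real) \<Rightarrow> (nat \<Rightarrow> nat \<Rightarrow> real) \<Rightarrow> (nat \<Rightarrow> real) \<Rightarrow> (nat \<Rightarrow> nat \<Rightarrow> real) \<Rightarrow> bool" where
  "competitive_equilibrium n m alpha e p x \<longleftrightarrow>
     (\<forall>j<m. 0 \<le> p j) \<and> (\<exists>j<m. p j \<noteq> 0) \<and>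
     (\<forall>j<m. (\<Sum>k<n. x k j) = (\<Sum>k<n. e k j)) \<and>
     (\<forall>k<n. in_demand m (alpha k) (e k) p (x k))"

end

theory Submission
  imports Defs
begin

lemma cd_exp:
  assumes "\<forall>j<m. a j \<noteq> 0 \<longrightarrow> y j > 0"
  shows "cobb_douglas m a y = exp (\<Sum>j<m. if a j = 0 then 0 else a j * ln (y j))"
proof -
  have "cobb_douglas m a y = (\<Prod>j<m. exp (if a j = 0 then 0 else a j * ln (y j)))"
    unfolding cobb_douglas_def
    by (rule prod.cong) (use assms in \<open>auto simp: powr_def mult.commute\<close>)
  also have "\<dots> = exp (\<Sum>j<m. if a j = 0 then 0 else a j * ln (y j))"
    by (simp add: exp_sum)
  finally show ?thesis .
qed

lemma cd_nonneg: "\<forall>j<m. 0 \<le> y j \<Longrightarrow> 0 \<le> cobb_douglas m a y"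
  unfolding cobb_douglas_def by (auto intro!: prod_nonneg)

lemma cd_pos: "\<forall>j<m. 0 < y j \<Longrightarrow> 0 < cobb_douglas m a y"
  unfolding cobb_douglas_def by (auto intro!: prod_pos)

lemma cd_zero: "j < m \<Longrightarrow> a j \<noteq> 0 \<Longrightarrow> y j = 0 \<Longrightarrow> cobb_douglas m a y = 0"
  unfolding cobb_douglas_def by (auto simp: prod_zero_iff)

lemma cd_scale:
  assumes "c > 0" "(\<Sum>j<m. a j) = 1"
  shows "cobb_douglas m a (\<lambda>j. c * y j) = c * cobb_douglas m a y"
proof -
  have "cobb_douglas m a (\<lambda>j. c * y j) = (\<Prod>j<m. c powr a j * (if a j = 0 then 1 else y j powr a j))"
    unfolding cobb_douglas_def by (rule prod.cong) (use assms in \<open>auto simp: powr_mult\<close>)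
  also have "\<dots> = (\<Prod>j<m. c powr a j) * cobb_douglas m a y"
    by (simp add: prod.distrib cobb_douglas_def)
  also have "(\<Prod>j<m. c powr a j) = c powr (\<Sum>j<m. a j)"
    using assms(1) powr_sum[of c a "{..<m}"] by simp
  finally show ?thesis using assms by simp
qed

lemma cd_less:
  assumes "\<forall>j<m. a j \<noteq> 0 \<longrightarrow> y j > 0" "\<forall>j<m. a j \<noteq> 0 \<longrightarrow> z j > 0"
    "(\<Sum>j<m. if a j = 0 then 0 else a j * ln (y j)) < (\<Sum>j<m. if a j = 0 then 0 else a j * ln (z j))"
  shows "cobb_douglas m a y < cobb_douglas m a z"
  using assms by (simp add: cd_exp)

lemma demand_u_pos:
  assumes "in_demand m a w p y" "\<forall>j<m. 0 < w j"
  shows "0 < cobb_douglas m a y"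
proof -
  have "cobb_douglas m a w \<le> cobb_douglas m a y"
    using assms unfolding in_demand_def by (auto simp: less_imp_le)
  moreover have "0 < cobb_douglas m a w" using assms(2) by (rule cd_pos)
  ultimately show ?thesis by linarith
qed

lemma demand_pos_coord:
  assumes "in_demand m a w p y" "\<forall>j<m. 0 < w j"
  shows "\<forall>j<m. a j \<noteq> 0 \<longrightarrow> 0 < y j"
proof (intro allI impI)
  fix j assume j: "j < m" "a j \<noteq> 0"
  have "0 \<le> y j" using assms j unfolding in_demand_def by auto
  moreover have "y j \<noteq> 0"
    using cd_zero[of j m a y] j demand_u_pos[OF assms] by auto
  ultimately show "0 < y j" by simp
qed

lemma price_pos:
  assumes ce: "competitive_equilibrium n m alpha e p x"
    and sc: "strongly_competitive n m alpha"
    and epos: "\<forall>k<n. \<forall>j<m. e k j > 0" and t: "t < m"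
  shows "p t > 0"
proof (rule ccontr)
  assume "\<not> p t > 0"
  then have pt: "p t = 0" using ce t by (force simp: competitive_equilibrium_def)
  obtain k where k: "k < n" "alpha k t > 0" using sc t unfolding strongly_competitive_def by auto
  have dem: "in_demand m (alpha k) (e k) p (x k)"
    using ce k by (auto simp: competitive_equilibrium_def)
  have ek: "\<forall>j<m. 0 < e k j" using epos k by auto
  have ypos: "\<forall>j<m. alpha k j \<noteq> 0 \<longrightarrow> x k j > 0"
    by (rule demand_pos_coord[OF dem ek])
  define z where "z = (x k)(t := x k t + 1)"
  have y0: "\<forall>j<m. 0 \<le> x k j" using dem unfolding in_demand_def by auto
  have z0: "\<forall>j<m. 0 \<le> z j" using y0 by (auto simp: z_def)
  have "price_dot m p z = price_dot m p (x k)"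
    unfolding price_dot_def by (rule sum.cong) (auto simp: z_def pt)
  then have "price_dot m p z \<le> price_dot m p (e k)" using dem unfolding in_demand_def by auto
  then have le: "cobb_douglas m (alpha k) z \<le> cobb_douglas m (alpha k) (x k)"
    using dem z0 unfolding in_demand_def by blast
  have zpos: "\<forall>j<m. alpha k j \<noteq> 0 \<longrightarrow> z j > 0" using ypos by (auto simp: z_def)
  have "(\<Sum>j<m. if alpha k j = 0 then 0 else alpha k j * ln (x k j))
      < (\<Sum>j<m. if alpha k j = 0 then 0 else alpha k j * ln (z j))"
  proof (rule sum_strict_mono_ex1)
    show "\<forall>j\<in>{..<m}. (if alpha k j = 0 then 0 else alpha k j * ln (x k j))
        \<le> (if alpha k j = 0 then 0 else alpha k j * ln (z j))"
      using ypos k by (auto simp: z_def intro!: mult_left_mono)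
    show "\<exists>j\<in>{..<m}. (if alpha k j = 0 then 0 else alpha k j * ln (x k j))
        < (if alpha k j = 0 then 0 else alpha k j * ln (z j))"
      using ypos k t by (auto simp: z_def intro!: bexI[of _ t])
  qed simp
  then have "cobb_douglas m (alpha k) (x k) < cobb_douglas m (alpha k) z"
    using cd_less ypos zpos by blast
  with le show False by simp
qed

lemma demand_formula:
  assumes dem: "in_demand m a w p y" and va: "valid_exponents m a"
    and ppos: "\<forall>j<m. 0 < p j" and wpos: "\<forall>j<m. 0 < w j" and m1: "m \<ge> 1"
    and t: "t < m"
  shows "p t * y t = a t * price_dot m p w"
proof -
  define W where "W = price_dot m p w"
  have Wpos: "W > 0" unfolding W_def price_dot_def
    using m1 ppos wpos by (intro sum_pos) (auto simp: lessThan_empty_iff)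
  have y0: "\<forall>j<m. 0 \<le> y j" and budget: "price_dot m p y \<le> W"
    and opt: "\<And>z. (\<forall>j<m. 0 \<le> z j) \<Longrightarrow> price_dot m p z \<le> W \<Longrightarrow> cobb_douglas m a z \<le> cobb_douglas m a y"
    using dem unfolding in_demand_def W_def by auto
  have a0: "\<forall>j<m. 0 \<le> a j" and asum: "(\<Sum>j<m. a j) = 1" using va unfolding valid_exponents_def by auto
  have ypos: "\<forall>j<m. a j \<noteq> 0 \<longrightarrow> 0 < y j" by (rule demand_pos_coord[OF dem wpos])
  define ys where "ys j = a j * W / p j" for j
  have ys0: "\<forall>j<m. 0 \<le> ys j" using a0 ppos Wpos by (auto simp: ys_def)
  have "price_dot m p ys = (\<Sum>j<m. a j * W)"
    unfolding price_dot_def by (rule sum.cong) (use ppos in \<open>auto simp: ys_def\<close>)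
  also have "\<dots> = W" using asum by (simp add: sum_distrib_right[symmetric])
  finally have ysb: "price_dot m p ys \<le> W" by simp
  have yspos: "\<forall>j<m. a j \<noteq> 0 \<longrightarrow> 0 < ys j"
    using a0 ppos Wpos by (auto simp: ys_def less_le)
  have eqS: "\<forall>j<m. a j \<noteq> 0 \<longrightarrow> y j = ys j"
  proof (rule ccontr)
    assume "\<not> (\<forall>j<m. a j \<noteq> 0 \<longrightarrow> y j = ys j)"
    then obtain s where s: "s < m" "a s \<noteq> 0" "y s \<noteq> ys s" by auto
    have "(\<Sum>j<m. if a j = 0 then 0 else a j * ln (y j)) - (\<Sum>j<m. if a j = 0 then 0 else a j * ln (ys j))
        = (\<Sum>j<m. if a j = 0 then 0 else a j * (ln (y j) - ln (ys j)))"
      by (simp add: sum_subtractf[symmetric] right_diff_distrib if_distrib cong: if_cong)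
    also have "\<dots> < (\<Sum>j<m. if a j = 0 then 0 else a j * ((y j - ys j) / ys j))"
    proof (rule sum_strict_mono_ex1)
      show "\<forall>j\<in>{..<m}. (if a j = 0 then 0 else a j * (ln (y j) - ln (ys j)))
          \<le> (if a j = 0 then 0 else a j * ((y j - ys j) / ys j))"
      proof
        fix j assume j: "j \<in> {..<m}"
        show "(if a j = 0 then 0 else a j * (ln (y j) - ln (ys j)))
          \<le> (if a j = 0 then 0 else a j * ((y j - ys j) / ys j))"
        proof (cases "a j = 0")
          case False
          then have "a j * (ln (y j) - ln (ys j)) \<le> a j * ((y j - ys j) / ys j)"
            using ypos yspos a0 j by (intro mult_left_mono ln_diff_le) auto
          then show ?thesis using False by simp
        qed simp
      qed
      have "a s * (ln (y s) - ln (ys s)) < a s * ((y s - ys s) / ys s)"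
        using ypos yspos a0 s by (intro mult_strict_left_mono ln_diff_less) (auto simp: less_le)
      then show "\<exists>j\<in>{..<m}. (if a j = 0 then 0 else a j * (ln (y j) - ln (ys j)))
          < (if a j = 0 then 0 else a j * ((y j - ys j) / ys j))"
        using s by (intro bexI[of _ s]) auto
    qed simp
    also have "\<dots> = (\<Sum>j<m. if a j = 0 then 0 else p j * y j / W - a j)"
      by (rule sum.cong) (use ppos Wpos in \<open>auto simp: ys_def field_simps\<close>)
    also have "\<dots> \<le> (\<Sum>j<m. p j * y j / W - a j)"
      by (rule sum_mono) (use ppos Wpos y0 in \<open>auto\<close>)
    also have "\<dots> = price_dot m p y / W - 1"
      by (simp add: sum_subtractf asum price_dot_def sum_divide_distrib)
    also have "\<dots> \<le> 0" using budget Wpos by simp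
    finally have "cobb_douglas m a y < cobb_douglas m a ys"
      using cd_less[OF ypos yspos] by simp
    moreover have "cobb_douglas m a ys \<le> cobb_douglas m a y" using opt ys0 ysb by blast
    ultimately show False by simp
  qed
  show ?thesis
  proof (cases "a t = 0")
    case False
    then show ?thesis using eqS t ppos by (auto simp: ys_def W_def)
  next
    case True
    have "price_dot m p y = (\<Sum>j<m. if a j = 0 then p j * y j else 0) + (\<Sum>j<m. if a j = 0 then 0 else p j * y j)"
      unfolding price_dot_def sum.distrib[symmetric] by (rule sum.cong) auto
    moreover have "(\<Sum>j<m. if a j = 0 then 0 else p j * y j) = (\<Sum>j<m. a j * W)"
      by (rule sum.cong) (use eqS ppos in \<open>auto simp: ys_def\<close>)
    moreover have "(\<Sum>j<m. a j * W) = W" using asum by (simp add: sum_distrib_right[symmetric])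
    ultimately have "(\<Sum>j<m. if a j = 0 then p j * y j else 0) \<le> 0" using budget by simp
    moreover have "(if a t = 0 then p t * y t else 0) \<le> (\<Sum>j<m. if a j = 0 then p j * y j else 0)"
      by (rule member_le_sum) (use t ppos y0 in \<open>auto intro: less_imp_le\<close>)
    ultimately have "p t * y t \<le> 0" using True by simp
    moreover have "0 \<le> p t * y t" using ppos y0 t by (auto intro: less_imp_le)
    ultimately show ?thesis using True by simp
  qed
qed

lemma key_D:
  fixes N :: "nat \<Rightarrow> nat \<Rightarrow> real" and z f :: "nat \<Rightarrow> real"
  assumes j: "j < m"
    and zeq: "\<forall>t<m. z t = (\<Sum>l<m. N t l * z l) + f t"
    and N0: "\<forall>t<m. \<forall>l<m. 0 \<le> N t l"
    and col: "\<forall>l<m. (\<Sum>t<m. N t l) < 1"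
    and fD: "\<forall>D \<subseteq> {..<m}. j \<in> D \<longrightarrow> sum f D \<le> 0"
  shows "z j \<le> 0"
proof (rule ccontr)
  assume "\<not> z j \<le> 0"
  define D where "D = {t. t < m \<and> z t > 0}"
  have jD: "j \<in> D" using j \<open>\<not> z j \<le> 0\<close> by (auto simp: D_def)
  have Dsub: "D \<subseteq> {..<m}" by (auto simp: D_def)
  have finD: "finite D" using Dsub finite_subset by blast
  have "sum z D = (\<Sum>t\<in>D. (\<Sum>l<m. N t l * z l) + f t)"
  proof (rule sum.cong)
    fix t assume "t \<in> D"
    then have "t < m" using Dsub by auto
    then show "z t = (\<Sum>l<m. N t l * z l) + f t" using zeq by blast
  qed simp
  also have "\<dots> = (\<Sum>t\<in>D. (\<Sum>l<m. N t l * z l)) + sum f D"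
    by (rule sum.distrib)
  also have "\<dots> \<le> (\<Sum>t\<in>D. (\<Sum>l<m. N t l * z l))"
  proof -
    have "sum f D \<le> 0" using fD Dsub jD by blast
    then show ?thesis by simp
  qed
  also have "\<dots> \<le> (\<Sum>t\<in>D. (\<Sum>l\<in>D. N t l * z l))"
  proof (rule sum_mono)
    fix t assume t: "t \<in> D"
    have "(\<Sum>l<m. N t l * z l) = (\<Sum>l\<in>D. N t l * z l) + (\<Sum>l\<in>{..<m}-D. N t l * z l)"
      using sum.subset_diff[OF Dsub, of "\<lambda>l. N t l * z l"] by (simp add: add.commute)
    moreover have "(\<Sum>l\<in>{..<m}-D. N t l * z l) \<le> 0"
    proof (rule sum_nonpos)
      fix l assume "l \<in> {..<m} - D"
      then have "z l \<le> 0" "0 \<le> N t l" using N0 t Dsub by (auto simp: D_def)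
      then show "N t l * z l \<le> 0" by (simp add: mult_nonneg_nonpos)
    qed
    ultimately show "(\<Sum>l<m. N t l * z l) \<le> (\<Sum>l\<in>D. N t l * z l)" by simp
  qed
  also have "\<dots> = (\<Sum>l\<in>D. (\<Sum>t\<in>D. N t l) * z l)"
    by (subst sum.swap) (simp add: sum_distrib_right)
  also have "\<dots> < (\<Sum>l\<in>D. z l)"
  proof (rule sum_strict_mono)
    show "D \<noteq> {}" using jD by auto
    fix l assume l: "l \<in> D"
    have "(\<Sum>t\<in>D. N t l) \<le> (\<Sum>t<m. N t l)"
      using Dsub N0 l by (intro sum_mono2) auto
    moreover have "l < m" using l Dsub by auto
    ultimately have "(\<Sum>t\<in>D. N t l) < 1" using col by (meson le_less_trans)
    moreover have "z l > 0" using l by (auto simp: D_def)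
    ultimately show "(\<Sum>t\<in>D. N t l) * z l < z l" by simp
  qed (rule finD)
  finally show False by simp
qed

lemma price_eq:
  assumes ce: "competitive_equilibrium n m alpha e p x" and ve: "valid_endowments n m e"
    and dx: "\<forall>k<n. \<forall>t<m. p t * x k t = alpha k t * price_dot m p (e k)" and t: "t < m"
  shows "p t = (\<Sum>k<n. alpha k t * price_dot m p (e k))"
proof -
  have "(\<Sum>k<n. x k t) = 1" using ce ve t
    unfolding competitive_equilibrium_def valid_endowments_def by auto
  then have "p t = p t * (\<Sum>k<n. x k t)" by simp
  also have "\<dots> = (\<Sum>k<n. p t * x k t)" by (simp add: sum_distrib_left)
  also have "\<dots> = (\<Sum>k<n. alpha k t * price_dot m p (e k))"
    using dx t by (auto intro!: sum.cong)
  finally show ?thesis .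
qed

lemma sum_remove_i:
  fixes g :: "nat \<Rightarrow> real"
  assumes "i < n"
  shows "(\<Sum>k<n. g k) = (\<Sum>k\<in>{..<n}-{i}. g k) + g i"
  using assms sum.remove[of "{..<n}" i g] by (simp add: add.commute)

theorem theorem1:
  fixes n m i :: nat
    and alpha alpha' e x x' :: "nat \<Rightarrow> nat \<Rightarrow> real"
    and p p' :: "nat \<Rightarrow> real"
  assumes "n \<ge> 1" and "m \<ge> 1" and "i < n"
    and "valid_endowments n m e"
    and "\<forall>k<n. \<forall>j<m. e k j > 0"
    and "\<forall>k<n. valid_exponents m (alpha k)"
    and "valid_exponents m (alpha' i)"
    and "\<forall>k<n. k \<noteq> i \<longrightarrow> alpha' k = alpha k"
    and "strongly_competitive n m alpha"
    and "strongly_competitive n m alpha'"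
    and "competitive_equilibrium n m alpha e p x"
    and "competitive_equilibrium n m alpha' e p' x'"
  shows "cobb_douglas m (alpha i) (x' i) / cobb_douglas m (alpha i) (x i) \<le> real m"
proof -
  note m1 = assms(2) and iN = assms(3) and ve = assms(4) and epos = assms(5)
    and va = assms(6) and vai = assms(7) and same = assms(8)
    and sc = assms(9) and sc' = assms(10) and ce = assms(11) and ce' = assms(12)
  have va': "\<forall>k<n. valid_exponents m (alpha' k)" using va vai same by metis
  have ppos: "\<forall>t<m. p t > 0" using price_pos[OF ce sc epos] by blast
  have ppos': "\<forall>t<m. p' t > 0" using price_pos[OF ce' sc' epos] by blast
  define w where "w k = price_dot m p (e k)" for k
  define w' where "w' k = price_dot m p' (e k)" for k
  have wpos: "w k > 0" if "k < n" for k unfolding w_def price_dot_def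
    using m1 ppos epos that by (intro sum_pos) (auto simp: lessThan_empty_iff)
  have wpos': "w' k > 0" if "k < n" for k unfolding w'_def price_dot_def
    using m1 ppos' epos that by (intro sum_pos) (auto simp: lessThan_empty_iff)
  have dem: "in_demand m (alpha k) (e k) p (x k)" if "k < n" for k
    using ce that unfolding competitive_equilibrium_def by auto
  have dem': "in_demand m (alpha' k) (e k) p' (x' k)" if "k < n" for k
    using ce' that unfolding competitive_equilibrium_def by auto
  have dx: "\<forall>k<n. \<forall>t<m. p t * x k t = alpha k t * price_dot m p (e k)"
    using demand_formula[OF dem _ ppos _ m1] va epos by blast
  have dx': "\<forall>k<n. \<forall>t<m. p' t * x' k t = alpha' k t * price_dot m p' (e k)"
    using demand_formula[OF dem' _ ppos' _ m1] va' epos by blast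
  have peq: "p t = (\<Sum>k<n. alpha k t * w k)" if "t < m" for t
    using price_eq[OF ce ve dx that] by (simp add: w_def)
  have peq': "p' t = (\<Sum>k<n. alpha' k t * w' k)" if "t < m" for t
    using price_eq[OF ce' ve dx' that] by (simp add: w'_def)
  define N where "N t l = (\<Sum>k\<in>{..<n}-{i}. alpha k t * e k l)" for t l
  have Np: "(\<Sum>l<m. N t l * q l) = (\<Sum>k\<in>{..<n}-{i}. alpha k t * price_dot m q (e k))" for t q
  proof -
    have "(\<Sum>l<m. N t l * q l) = (\<Sum>l<m. \<Sum>k\<in>{..<n}-{i}. alpha k t * e k l * q l)"
      by (simp add: N_def sum_distrib_right)
    also have "\<dots> = (\<Sum>k\<in>{..<n}-{i}. \<Sum>l<m. alpha k t * e k l * q l)" by (rule sum.swap)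
    also have "\<dots> = (\<Sum>k\<in>{..<n}-{i}. alpha k t * price_dot m q (e k))"
      by (simp add: price_dot_def sum_distrib_left mult_ac)
    finally show ?thesis .
  qed
  have key: "alpha' i j * w' i * p j \<le> w i * p' j" if j: "j < m" for j
  proof -
    define c where "c = alpha' i j"
    define z where "z t = c * w' i * p t - w i * p' t" for t
    define f where "f t = w i * w' i * (c * alpha i t - alpha' i t)" for t
    have "z j \<le> 0"
    proof (rule key_D[OF j, of z N f])
      show "\<forall>t<m. z t = (\<Sum>l<m. N t l * z l) + f t"
      proof (intro allI impI)
        fix t assume t: "t < m"
        have A: "p t = (\<Sum>k\<in>{..<n}-{i}. alpha k t * w k) + alpha i t * w i"
          using peq[OF t] sum_remove_i[OF iN] by simp
        have "(\<Sum>k\<in>{..<n}-{i}. alpha' k t * w' k) = (\<Sum>k\<in>{..<n}-{i}. alpha k t * w' k)"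
          using same by (intro sum.cong) auto
        then have B: "p' t = (\<Sum>k\<in>{..<n}-{i}. alpha k t * w' k) + alpha' i t * w' i"
          using peq'[OF t] sum_remove_i[OF iN, of "\<lambda>k. alpha' k t * w' k"] by simp
        have "(\<Sum>l<m. N t l * z l) = c * w' i * (\<Sum>l<m. N t l * p l) - w i * (\<Sum>l<m. N t l * p' l)"
          by (simp add: z_def sum_subtractf sum_distrib_left algebra_simps)
        also have "\<dots> = c * w' i * (\<Sum>k\<in>{..<n}-{i}. alpha k t * w k) - w i * (\<Sum>k\<in>{..<n}-{i}. alpha k t * w' k)"
          by (simp add: Np w_def w'_def)
        finally show "z t = (\<Sum>l<m. N t l * z l) + f t"
          by (simp add: z_def f_def A B algebra_simps)
      qed
      show "\<forall>t<m. \<forall>l<m. 0 \<le> N t l"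
        using va ve unfolding N_def valid_exponents_def valid_endowments_def
        by (auto intro!: sum_nonneg mult_nonneg_nonneg)
      show "\<forall>l<m. (\<Sum>t<m. N t l) < 1"
      proof (intro allI impI)
        fix l assume l: "l < m"
        have "(\<Sum>t<m. N t l) = (\<Sum>k\<in>{..<n}-{i}. e k l * (\<Sum>t<m. alpha k t))"
          unfolding N_def by (subst sum.swap) (simp add: sum_distrib_left mult.commute)
        also have "\<dots> = (\<Sum>k\<in>{..<n}-{i}. e k l)"
          using va unfolding valid_exponents_def by (intro sum.cong) auto
        also have "\<dots> = (\<Sum>k<n. e k l) - e i l"
          using sum_remove_i[OF iN, of "\<lambda>k. e k l"] by simp
        also have "\<dots> = 1 - e i l" using ve l unfolding valid_endowments_def by auto
        finally show "(\<Sum>t<m. N t l) < 1" using epos iN l by auto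
      qed
      show "\<forall>D \<subseteq> {..<m}. j \<in> D \<longrightarrow> sum f D \<le> 0"
      proof (intro allI impI)
        fix D assume D: "D \<subseteq> {..<m}" and jD: "j \<in> D"
        have finD: "finite D" using D finite_subset by blast
        have a1: "(\<Sum>t\<in>D. alpha i t) \<le> 1"
        proof -
          have "(\<Sum>t\<in>D. alpha i t) \<le> (\<Sum>t<m. alpha i t)"
            using D va iN unfolding valid_exponents_def by (intro sum_mono2) auto
          then show ?thesis using va iN unfolding valid_exponents_def by auto
        qed
        have a2: "c \<le> (\<Sum>t\<in>D. alpha' i t)"
          unfolding c_def using jD finD D vai unfolding valid_exponents_def
          by (intro member_le_sum) auto
        have c0: "0 \<le> c" using vai j unfolding c_def valid_exponents_def by auto
        have "sum f D = w i * w' i * (c * (\<Sum>t\<in>D. alpha i t) - (\<Sum>t\<in>D. alpha' i t))"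
          by (simp add: f_def sum_distrib_left sum_subtractf algebra_simps)
        moreover have "c * (\<Sum>t\<in>D. alpha i t) - (\<Sum>t\<in>D. alpha' i t) \<le> 0"
          using a1 a2 c0 mult_left_le[of "\<Sum>t\<in>D. alpha i t" c] by linarith
        moreover have "0 < w i * w' i" using wpos wpos' iN by simp
        ultimately show "sum f D \<le> 0" by (simp add: mult_nonneg_nonpos)
      qed
    qed
    then show ?thesis by (simp add: z_def c_def)
  qed
  have pg: "p t * x' i t \<le> w i" if t: "t < m" for t
  proof -
    have "p' t * (p t * x' i t) = p t * (alpha' i t * w' i)"
      using dx' iN t by (simp add: w'_def algebra_simps)
    also have "\<dots> \<le> p' t * w i" using key[OF t] by (simp add: algebra_simps)
    finally show ?thesis using ppos' t by simp
  qed
  have x'0: "\<forall>j<m. 0 \<le> x' i j" using dem'[OF iN] unfolding in_demand_def by auto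
  define zz where "zz j = (1 / real m) * x' i j" for j
  have zz0: "\<forall>j<m. 0 \<le> zz j" using x'0 by (simp add: zz_def)
  have "price_dot m p zz = (1 / real m) * (\<Sum>j<m. p j * x' i j)"
    by (simp add: price_dot_def zz_def sum_distrib_left algebra_simps)
  also have "(\<Sum>j<m. p j * x' i j) \<le> real m * w i"
    using sum_bounded_above[of "{..<m}" "\<lambda>j. p j * x' i j" "w i"] pg by simp
  then have "(1 / real m) * (\<Sum>j<m. p j * x' i j) \<le> (1 / real m) * (real m * w i)"
    by (intro mult_left_mono) auto
  finally have "price_dot m p zz \<le> w i" using m1 by simp
  then have "cobb_douglas m (alpha i) zz \<le> cobb_douglas m (alpha i) (x i)"
    using dem[OF iN] zz0 unfolding in_demand_def w_def by blast
  moreover have "cobb_douglas m (alpha i) zz = (1 / real m) * cobb_douglas m (alpha i) (x' i)"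
    unfolding zz_def using m1 va iN unfolding valid_exponents_def by (intro cd_scale) auto
  ultimately have le: "cobb_douglas m (alpha i) (x' i) \<le> real m * cobb_douglas m (alpha i) (x i)"
    using m1 by (simp add: field_simps)
  have "0 \<le> cobb_douglas m (alpha i) (x i)"
    using dem[OF iN] unfolding in_demand_def by (auto intro: cd_nonneg)
  then show ?thesis
  proof (cases "cobb_douglas m (alpha i) (x i) = 0")
    case False
    then have "0 < cobb_douglas m (alpha i) (x i)" using \<open>0 \<le> _\<close> by simp
    then show ?thesis using le by (simp add: pos_divide_le_eq)
  qed simp
qed

end
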